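(* Let $G$ be a finite simple graph which has a perfect matching. Then Dom has a winning strategy in the Bicolored Domination Game on $G$, both in the Sepy-start and in the Dom-start version.
   Context: For a vertex $v$ of a graph $G$, $N[v]$ denotes its closed neighborhood. The Bicolored Domination Game on an isolate-free graph $G$ is played by Dom and Sepy, who alternately color vertices; Dom may only use color $p$ and Sepy may only use color $b$. $V_p,V_b$ denote the current sets of vertices of each color. A player with color $c$ makes a move by choosing a vertex $v$ such that (i) $v$ is uncolored and (ii) there exists $u\in N[v]$ with $N[u]\cap V_c=\emptyset$ (before the move); then $v$ gets color $c$. The game terminates as soon as one of the following holds: (s* ) some vertex $v$ has $N[v]\subseteq V_p$ or $N[v]\subseteq V_b$ — Sepy wins; (d** ) for some $c\in\{p,b\}$, $V_c$ dominates all vertices of $G$ and no vertex $v$ satisfies $N[v]\subseteq V_c$ — Dom wins. In the Dom-start (Sepy-start) version Dom (Sepy) moves first. *)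

theory Defs
  imports Main
begin

definition finite_simple_graph :: "'a set \<Rightarrow> ('a \<Rightarrow> 'a \<Rightarrow> bool) \<Rightarrow> bool" where
  "finite_simple_graph V E \<longleftrightarrow> finite V \<and> (\<forall>u v. E u v \<longrightarrow> u \<in> V \<and> v \<in> V)
     \<and> (\<forall>u v. E u v \<longrightarrow> E v u) \<and> (\<forall>v. \<not> E v v)"

definition perfect_matching :: "'a set \<Rightarrow> ('a \<Rightarrow> 'a \<Rightarrow> bool) \<Rightarrow> 'a set set \<Rightarrow> bool" where
  "perfect_matching V E M \<longleftrightarrow> (\<forall>e\<in>M. \<exists>u v. e = {u, v} \<and> E u v)
     \<and> (\<forall>v\<in>V. \<exists>!e. e \<in> M \<and> v \<in> e)"

definition has_perfect_matching :: "'a set \<Rightarrow> ('a \<Rightarrow> 'a \<Rightarrow> bool) \<Rightarrow> bool" where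
  "has_perfect_matching V E \<longleftrightarrow> (\<exists>M. perfect_matching V E M)"

definition cnbh :: "'a set \<Rightarrow> ('a \<Rightarrow> 'a \<Rightarrow> bool) \<Rightarrow> 'a \<Rightarrow> 'a set" where
  "cnbh V E v = insert v {u \<in> V. E v u}"

text \<open>A legal move for the player owning colour class C (current), with other class D.\<close>
definition legal_move :: "'a set \<Rightarrow> ('a \<Rightarrow> 'a \<Rightarrow> bool) \<Rightarrow> 'a set \<Rightarrow> 'a set \<Rightarrow> 'a \<Rightarrow> bool" where
  "legal_move V E C D v \<longleftrightarrow> v \<in> V \<and> v \<notin> C \<and> v \<notin> D
     \<and> (\<exists>u\<in>cnbh V E v. cnbh V E u \<inter> C = {})"

definition sepy_cond :: "'a set \<Rightarrow> ('a \<Rightarrow> 'a \<Rightarrow> bool) \<Rightarrow> 'a set \<Rightarrow> 'a set \<Rightarrow> bool" where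
  "sepy_cond V E P B \<longleftrightarrow> (\<exists>v\<in>V. cnbh V E v \<subseteq> P \<or> cnbh V E v \<subseteq> B)"

definition dominates :: "'a set \<Rightarrow> ('a \<Rightarrow> 'a \<Rightarrow> bool) \<Rightarrow> 'a set \<Rightarrow> bool" where
  "dominates V E C \<longleftrightarrow> (\<forall>w\<in>V. cnbh V E w \<inter> C \<noteq> {})"

definition dom_cond :: "'a set \<Rightarrow> ('a \<Rightarrow> 'a \<Rightarrow> bool) \<Rightarrow> 'a set \<Rightarrow> 'a set \<Rightarrow> bool" where
  "dom_cond V E P B \<longleftrightarrow>
     (\<exists>C\<in>{P, B}. dominates V E C \<and> \<not> (\<exists>v\<in>V. cnbh V E v \<subseteq> C))"

text \<open>Positions (P, B, dom_to_move) from which Dom has a winning strategy.\<close>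
inductive dom_wins :: "'a set \<Rightarrow> ('a \<Rightarrow> 'a \<Rightarrow> bool) \<Rightarrow> 'a set \<Rightarrow> 'a set \<Rightarrow> bool \<Rightarrow> bool"
  for V E where
  won: "\<not> sepy_cond V E P B \<Longrightarrow> dom_cond V E P B \<Longrightarrow> dom_wins V E P B t"
| dom_move: "\<not> sepy_cond V E P B \<Longrightarrow> \<not> dom_cond V E P B \<Longrightarrow> legal_move V E P B v
     \<Longrightarrow> dom_wins V E (insert v P) B False \<Longrightarrow> dom_wins V E P B True"
| sepy_move: "\<not> sepy_cond V E P B \<Longrightarrow> \<not> dom_cond V E P B
     \<Longrightarrow> (\<exists>v. legal_move V E B P v)
     \<Longrightarrow> (\<forall>v. legal_move V E B P v \<longrightarrow> dom_wins V E P (insert v B) True)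
     \<Longrightarrow> dom_wins V E P B False"

end

theory Submission
  imports Defs
begin

context
  fixes V :: "'a set" and E :: "'a \<Rightarrow> 'a \<Rightarrow> bool" and m :: "'a \<Rightarrow> 'a"
  assumes fin: "finite V"
    and EV: "\<And>u v. E u v \<Longrightarrow> u \<in> V \<and> v \<in> V"
    and irr: "\<And>v. \<not> E v v"
    and mE: "\<And>x. x \<in> V \<Longrightarrow> E x (m x)"
    and mm: "\<And>x. x \<in> V \<Longrightarrow> m (m x) = x"
begin

definition inv :: "'a set \<Rightarrow> 'a set \<Rightarrow> bool" where
  "inv P B \<longleftrightarrow> P \<subseteq> V \<and> B \<subseteq> V \<and> P \<inter> B = {} \<and> (\<forall>x\<in>P. m x \<notin> P)
     \<and> (\<forall>x\<in>B. m x \<notin> P \<longrightarrow> cnbh V E x \<inter> P \<noteq> {} \<and> cnbh V E (m x) \<inter> P \<noteq> {})"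

lemma self_in: "y \<in> cnbh V E y" by (simp add: cnbh_def)
lemma m_in: "y \<in> V \<Longrightarrow> m y \<in> cnbh V E y" using mE EV by (simp add: cnbh_def) blast
lemma m_in2: "y \<in> V \<Longrightarrow> y \<in> cnbh V E (m y)" using m_in[of "m y"] mm mE EV by metis
lemma mV: "y \<in> V \<Longrightarrow> m y \<in> V" using mE EV by blast
lemma mneq: "y \<in> V \<Longrightarrow> m y \<noteq> y" using mE irr by metis

lemma L1: assumes "inv P B" shows "\<not> sepy_cond V E P B"
proof
  assume "sepy_cond V E P B"
  then obtain y where y: "y \<in> V" "cnbh V E y \<subseteq> P \<or> cnbh V E y \<subseteq> B" unfolding sepy_cond_def by blast
  from y(2) show False
  proof
    assume h: "cnbh V E y \<subseteq> P"
    then show False using assms self_in[of y] m_in[OF y(1)] unfolding inv_def by blast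
  next
    assume h: "cnbh V E y \<subseteq> B"
    then have "y \<in> B" "m y \<in> B" using self_in[of y] m_in[OF y(1)] by blast+
    then show False using assms h unfolding inv_def by blast
  qed
qed

lemma L2: assumes "inv P B" "legal_move V E B P v" shows "\<not> sepy_cond V E P (insert v B)"
proof
  assume "sepy_cond V E P (insert v B)"
  then obtain y where y: "y \<in> V" "cnbh V E y \<subseteq> P \<or> cnbh V E y \<subseteq> insert v B" unfolding sepy_cond_def by blast
  have v: "v \<in> V" "v \<notin> P" "v \<notin> B" using assms(2) unfolding legal_move_def by auto
  have I: "P \<inter> B = {}" "\<forall>x\<in>P. m x \<notin> P"
     "\<forall>x\<in>B. m x \<notin> P \<longrightarrow> cnbh V E x \<inter> P \<noteq> {} \<and> cnbh V E (m x) \<inter> P \<noteq> {}"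
    using assms(1) unfolding inv_def by auto
  have s1: "y \<in> cnbh V E y" "m y \<in> cnbh V E y" using self_in m_in[OF y(1)] by auto
  from y(2) show False
  proof
    assume h: "cnbh V E y \<subseteq> P"
    then have "y \<in> P" "m y \<in> P" using s1 by auto
    then show False using I(2) by auto
  next
    assume h: "cnbh V E y \<subseteq> insert v B"
    then have yB: "y \<in> insert v B" "m y \<in> insert v B" using s1 by auto
    have disj: "cnbh V E y \<inter> P = {}" using h I(1) v(2) by auto
    show False
    proof (cases "y = v")
      case True
      then have "m v \<in> B" using yB mneq v by auto
      moreover have "m (m v) = v" using mm v by blast
      ultimately have "cnbh V E (m (m v)) \<inter> P \<noteq> {}" using I(3) v by metis
      then show False using \<open>m (m v) = v\<close> disj True by simp
    next
      case False
      then have "y \<in> B" using yB by blast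
      moreover have "m y \<notin> P" using yB I(1) v by auto
      ultimately show False using I(3) disj by auto
    qed
  qed
qed

lemma L3: assumes "inv P B" "\<not> dom_cond V E P B" shows "\<exists>v. legal_move V E B P v"
proof (rule ccontr)
  assume nl: "\<not> (\<exists>v. legal_move V E B P v)"
  have "dominates V E B"
    unfolding dominates_def
  proof
    fix y assume yV: "y \<in> V"
    show "cnbh V E y \<inter> B \<noteq> {}"
    proof
      assume yn: "cnbh V E y \<inter> B = {}"
      then have "y \<notin> B" using self_in by blast
      show False
      proof (cases "y \<in> P")
        case False
        then have "legal_move V E B P y" unfolding legal_move_def using yV \<open>y \<notin> B\<close> yn self_in by blast
        then show ?thesis using nl by blast
      next
        case True
        then have "m y \<notin> P" using assms(1) unfolding inv_def by blast
        moreover have "m y \<notin> B" using yn m_in[OF yV] by blast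
        ultimately have "legal_move V E B P (m y)" unfolding legal_move_def
          using mV[OF yV] m_in2[OF yV] yn by blast
        then show ?thesis using nl by blast
      qed
    qed
  qed
  moreover have "\<not> (\<exists>v\<in>V. cnbh V E v \<subseteq> B)" using L1[OF assms(1)] unfolding sepy_cond_def by blast
  ultimately have "dom_cond V E P B" unfolding dom_cond_def by blast
  then show False using assms(2) by blast
qed

lemma L4:
  assumes inv: "inv P B" and lm: "legal_move V E B P v" and nd: "\<not> dom_cond V E P (insert v B)"
  shows "\<exists>w. legal_move V E P (insert v B) w \<and> inv (insert w P) (insert v B)"
proof -
  have v: "v \<in> V" "v \<notin> P" "v \<notin> B" using lm unfolding legal_move_def by auto
  have I: "P \<subseteq> V" "B \<subseteq> V" "P \<inter> B = {}" "\<forall>x\<in>P. m x \<notin> P"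
     "\<forall>x\<in>B. m x \<notin> P \<longrightarrow> cnbh V E x \<inter> P \<noteq> {} \<and> cnbh V E (m x) \<inter> P \<noteq> {}"
    using inv unfolding inv_def by auto
  have ns: "\<not> sepy_cond V E P (insert v B)" using L2[OF inv lm] .
  have "\<not> dominates V E P"
  proof
    assume "dominates V E P"
    moreover have "\<not> (\<exists>u\<in>V. cnbh V E u \<subseteq> P)" using ns unfolding sepy_cond_def by blast
    ultimately have "dom_cond V E P (insert v B)" unfolding dom_cond_def by blast
    then show False using nd by blast
  qed
  then obtain y where y: "y \<in> V" "cnbh V E y \<inter> P = {}" unfolding dominates_def by blast
  have mvV: "m v \<in> V" using mV v(1) .
  have mmv: "m (m v) = v" using mm v(1) .
  have mvv: "m v \<noteq> v" using mneq v(1) .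
  show ?thesis
  proof (cases "m v \<notin> P \<and> m v \<notin> insert v B \<and> legal_move V E P (insert v B) (m v)")
    case True
    have "inv (insert (m v) P) (insert v B)"
      unfolding inv_def
    proof (intro conjI ballI impI)
      show "insert (m v) P \<subseteq> V" using mvV I(1) by auto
      show "insert v B \<subseteq> V" using v I(2) by auto
      show "insert (m v) P \<inter> insert v B = {}" using True I(3) v by auto
    next
      fix x assume x: "x \<in> insert (m v) P"
      show "m x \<notin> insert (m v) P"
      proof (cases "x = m v")
        case True then show ?thesis using mmv mvv v by auto
      next
        case False
        then have xP: "x \<in> P" using x by auto
        have xV: "x \<in> V" using xP I(1) by blast
        have "m x \<noteq> m v"
        proof
          assume "m x = m v"
          then have "m (m x) = m (m v)" by (rule arg_cong)
          then have "x = v" using mm[OF xV] mmv by simp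
          then show False using xP v(2) by simp
        qed
        then show ?thesis using I(4) xP by auto
      qed
    next
      fix x assume x: "x \<in> insert v B" and mx: "m x \<notin> insert (m v) P"
      then have xB: "x \<in> B" by auto
      then have "cnbh V E x \<inter> P \<noteq> {} \<and> cnbh V E (m x) \<inter> P \<noteq> {}" using I(5) mx by auto
      then show "cnbh V E x \<inter> insert (m v) P \<noteq> {}" "cnbh V E (m x) \<inter> insert (m v) P \<noteq> {}" by auto
    qed
    then show ?thesis using True by blast
  next
    case False
    have safe: "cnbh V E v \<inter> P \<noteq> {} \<and> cnbh V E (m v) \<inter> P \<noteq> {}" if nP: "m v \<notin> P"
    proof (cases "m v \<in> B")
      case True
      then have "cnbh V E (m v) \<inter> P \<noteq> {} \<and> cnbh V E (m (m v)) \<inter> P \<noteq> {}" using I(5) mmv v(2) by metis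
      then show ?thesis using mmv by simp
    next
      case False2: False
      then have "\<not> legal_move V E P (insert v B) (m v)" using False nP mvv by auto
      then have "\<forall>u\<in>cnbh V E (m v). cnbh V E u \<inter> P \<noteq> {}"
        unfolding legal_move_def using mvV nP False2 mvv by auto
      then show ?thesis using self_in[of "m v"] m_in2[OF v(1)] by auto
    qed
    have yP: "y \<notin> P" using y self_in by auto
    have myP: "m y \<notin> P" using y m_in[OF y(1)] by auto
    have yv: "y \<noteq> v"
    proof
      assume "y = v"
      then have "m v \<notin> P" using myP by simp
      then show False using safe y \<open>y = v\<close> by auto
    qed
    have yB: "y \<notin> B"
    proof
      assume "y \<in> B"
      then show False using I(5) myP y(2) by auto
    qed
    have lmy: "legal_move V E P (insert v B) y"
      unfolding legal_move_def using y yP yB yv self_in[of y] by auto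
    have "inv (insert y P) (insert v B)"
      unfolding inv_def
    proof (intro conjI ballI impI)
      show "insert y P \<subseteq> V" using y I(1) by auto
      show "insert v B \<subseteq> V" using v I(2) by auto
      show "insert y P \<inter> insert v B = {}" using yP yB yv I(3) v by auto
    next
      fix x assume x: "x \<in> insert y P"
      show "m x \<notin> insert y P"
      proof (cases "x = y")
        case True then show ?thesis using myP mneq[OF y(1)] by auto
      next
        case False
        then have xP: "x \<in> P" using x by auto
        have xV: "x \<in> V" using xP I(1) by blast
        have "m x \<noteq> y"
        proof
          assume "m x = y"
          then have "m (m x) = m y" by (rule arg_cong)
          then have "m y = x" using mm[OF xV] by simp
          then show False using xP myP by simp
        qed
        then show ?thesis using I(4) xP by auto
      qed
    next
      fix x assume x: "x \<in> insert v B" and mx: "m x \<notin> insert y P"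
      show "cnbh V E x \<inter> insert y P \<noteq> {}"
      proof (cases "x = v")
        case True then show ?thesis using safe mx by auto
      next
        case False then show ?thesis using I(5) x mx by auto
      qed
      show "cnbh V E (m x) \<inter> insert y P \<noteq> {}"
      proof (cases "x = v")
        case True then show ?thesis using safe mx by auto
      next
        case False then show ?thesis using I(5) x mx by auto
      qed
    qed
    then show ?thesis using lmy by blast
  qed
qed

lemma main: "inv P B \<Longrightarrow> dom_wins V E P B False"
proof (induction "card (V - (P \<union> B))" arbitrary: P B rule: less_induct)
  case less
  have ns: "\<not> sepy_cond V E P B" using L1[OF less.prems] .
  show ?case
  proof (cases "dom_cond V E P B")
    case True then show ?thesis using ns dom_wins.won by blast
  next
    case nd: False
    show ?thesis
    proof (rule dom_wins.sepy_move[OF ns nd L3[OF less.prems nd]], intro allI impI)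
      fix v assume lm: "legal_move V E B P v"
      have ns2: "\<not> sepy_cond V E P (insert v B)" using L2[OF less.prems lm] .
      show "dom_wins V E P (insert v B) True"
      proof (cases "dom_cond V E P (insert v B)")
        case True then show ?thesis using ns2 dom_wins.won by blast
      next
        case nd2: False
        obtain w where w: "legal_move V E P (insert v B) w" "inv (insert w P) (insert v B)"
          using L4[OF less.prems lm nd2] by blast
        have v: "v \<in> V" "v \<notin> P" "v \<notin> B" using lm unfolding legal_move_def by auto
        have wv: "w \<in> V" "w \<notin> P" "w \<notin> insert v B" using w(1) unfolding legal_move_def by auto
        have sub: "V - (insert w P \<union> insert v B) \<subset> V - (P \<union> B)" using v wv by auto
        have "card (V - (insert w P \<union> insert v B)) < card (V - (P \<union> B))"
          using psubset_card_mono[OF _ sub] fin by auto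
        then have "dom_wins V E (insert w P) (insert v B) False" using less.hyps w(2) by blast
        then show ?thesis using dom_wins.dom_move[OF ns2 nd2 w(1)] by blast
      qed
    qed
  qed
qed

lemma inv_empty: "inv {} {}" unfolding inv_def by auto

lemma start_dom: "dom_wins V E {} {} True"
proof -
  have ns: "\<not> sepy_cond V E {} {}" using L1[OF inv_empty] .
  show ?thesis
  proof (cases "V = {}")
    case True
    then have "dom_cond V E {} {}" unfolding dom_cond_def dominates_def by auto
    then show ?thesis using ns dom_wins.won by blast
  next
    case False
    then obtain w where wV: "w \<in> V" by blast
    have nd: "\<not> dom_cond V E {} {}" unfolding dom_cond_def dominates_def using wV by auto
    have lm: "legal_move V E {} {} w" unfolding legal_move_def using wV self_in[of w] by auto
    have "inv {w} {}" unfolding inv_def using wV mneq[OF wV] by auto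
    then have "dom_wins V E {w} {} False" using main by blast
    then show ?thesis using dom_wins.dom_move[OF ns nd lm] by blast
  qed
qed

end

lemma matching_fun:
  assumes G: "finite_simple_graph V E" and M: "perfect_matching V E M"
  shows "\<exists>m. \<forall>x\<in>V. E x (m x) \<and> m (m x) = x"
proof -
  have sym: "\<And>u v. E u v \<Longrightarrow> E v u" using G unfolding finite_simple_graph_def by blast
  have EV: "\<And>u v. E u v \<Longrightarrow> v \<in> V" using G unfolding finite_simple_graph_def by blast
  have irr: "\<And>v. \<not> E v v" using G unfolding finite_simple_graph_def by blast
  have M1: "\<forall>e\<in>M. \<exists>u v. e = {u, v} \<and> E u v" and M2: "\<forall>v\<in>V. \<exists>!e. e \<in> M \<and> v \<in> e"
    using M unfolding perfect_matching_def by auto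
  have ex: "\<exists>y. {x, y} \<in> M \<and> E x y" if xV: "x \<in> V" for x
  proof -
    obtain e where e: "e \<in> M" "x \<in> e" using ex1_implies_ex[OF bspec[OF M2 xV]] by blast
    obtain u v where uv: "e = {u, v}" "E u v" using M1 e(1) by blast
    show ?thesis
    proof (cases "x = u")
      case True then show ?thesis using uv e by blast
    next
      case False then have xv: "x = v" using uv e by blast
      have "{v, u} = e" using uv(1) by (simp only: insert_commute)
      moreover have "E v u" using sym uv(2) .
      ultimately show ?thesis using xv e(1) by blast
    qed
  qed
  define m where "m x = (SOME y. {x, y} \<in> M \<and> E x y)" for x
  have m1: "{x, m x} \<in> M \<and> E x (m x)" if "x \<in> V" for x
    unfolding m_def using someI_ex[OF ex[OF that]] by blast
  have "m (m x) = x" if x: "x \<in> V" for x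
  proof -
    have mxV: "m x \<in> V" using m1[OF x] EV by blast
    have a: "{m x, m (m x)} \<in> M" using m1[OF mxV] by blast
    have b0: "{x, m x} \<in> M" using m1[OF x] by blast
    have "{m x, x} = {x, m x}" by (simp only: insert_commute)
    with b0 have b: "{m x, x} \<in> M" by simp
    have u: "\<exists>!e. e \<in> M \<and> m x \<in> e" using bspec[OF M2 mxV] .
    from u obtain e0 where e0: "\<forall>e'. e' \<in> M \<and> m x \<in> e' \<longrightarrow> e' = e0"
      by (rule ex1E) blast
    have "{m x, m (m x)} = e0" using e0 a by blast
    moreover have "{m x, x} = e0" using e0 b by blast
    ultimately have eq: "{m x, m (m x)} = {m x, x}" by simp
    have "m (m x) \<noteq> m x" using m1[OF mxV] irr by metis
    then have "m (m x) \<in> {m x, x}" using eq by blast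
    then show ?thesis using \<open>m (m x) \<noteq> m x\<close> by blast
  qed
  then show ?thesis using m1 by blast
qed

theorem proposition11:
  fixes V :: "'a set" and E :: "'a \<Rightarrow> 'a \<Rightarrow> bool"
  assumes "finite_simple_graph V E"
    and "has_perfect_matching V E"
  shows "dom_wins V E {} {} False \<and> dom_wins V E {} {} True"
proof -
  obtain M where M: "perfect_matching V E M" using assms(2) unfolding has_perfect_matching_def by blast
  obtain m where m: "\<forall>x\<in>V. E x (m x) \<and> m (m x) = x" using matching_fun[OF assms(1) M] by blast
  have G: "finite V" "\<And>u v. E u v \<Longrightarrow> u \<in> V \<and> v \<in> V" "\<And>v. \<not> E v v"
    using assms(1) unfolding finite_simple_graph_def by auto
  have mE: "\<And>x. x \<in> V \<Longrightarrow> E x (m x)" and mm: "\<And>x. x \<in> V \<Longrightarrow> m (m x) = x" using m by auto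
  show ?thesis
    using main[of V E m, OF G mE mm inv_empty[of V E m, OF G mE mm]] start_dom[of V E m, OF G mE mm] by blast
qed

end
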